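(* For all $r,s\in\mathbb{N}$ and all $a\in(0,1]$, $$\bar c_{2rs}(E(a,1))\le\bar c_{2r}(E(a,1)),$$ where $\bar c_k:=c_k^{\mathrm{EH}}/\bigl(\bigl[\tfrac{k+1}2\bigr]\pi\bigr)$ is the normalized $k$-th Ekeland–Hofer capacity on ellipsoids in $\mathbb{R}^4$.
   Context: $E(a_1,a_2)=\{z\in\mathbb{C}^2:|z_1|^2/a_1+|z_2|^2/a_2<1\}$. Ekeland–Hofer capacities on ellipsoids: writing the numbers $j a_i\pi$ ($j\in\mathbb{N}$, $i=1,2$) in increasing order with repetitions as $d_1\le d_2\le\dots$, $c_k^{\mathrm{EH}}(E(a_1,a_2))=d_k$. $[x]$ is the largest integer $\le x$. *)

theory Defs
  imports Complex_Main
begin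

text \<open>Spectrum multiset of the ellipsoid E(a1,a2): the numbers j * a_i * pi, j >= 1, i = 1,2,
  counted with repetition. The k-th Ekeland-Hofer capacity is the k-th smallest such number
  (k >= 1), i.e. the least x such that at least k of these numbers are <= x.\<close>

definition ell_count :: "real \<Rightarrow> real \<Rightarrow> real \<Rightarrow> nat" where
  "ell_count a1 a2 x = card {(i, j). (i::nat) \<in> {1, 2} \<and> (j::nat) \<ge> 1 \<and>
      real j * (if i = 1 then a1 else a2) * pi \<le> x}"

definition EH_cap :: "nat \<Rightarrow> real \<Rightarrow> real \<Rightarrow> real" where
  "EH_cap k a1 a2 = Inf {x. k \<le> ell_count a1 a2 x}"

definition EH_cap_norm :: "nat \<Rightarrow> real \<Rightarrow> real \<Rightarrow> real" where
  "EH_cap_norm k a1 a2 = EH_cap k a1 a2 / (real ((k + 1) div 2) * pi)"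

end

theory Submission
  imports Defs
begin

lemma cnt_set:
  fixes c x :: real assumes "c > 0"
  shows "{j::nat. j \<ge> 1 \<and> real j * c \<le> x} = {1..nat \<lfloor>x / c\<rfloor>}"
proof -
  have "real j * c \<le> x \<longleftrightarrow> j \<le> nat \<lfloor>x / c\<rfloor>" if "j \<ge> 1" for j
  proof -
    have "real j * c \<le> x \<longleftrightarrow> real j \<le> x / c" using assms by (simp add: pos_le_divide_eq)
    also have "\<dots> \<longleftrightarrow> int j \<le> \<lfloor>x / c\<rfloor>" by (simp add: le_floor_iff)
    also have "\<dots> \<longleftrightarrow> j \<le> nat \<lfloor>x / c\<rfloor>" 
    proof
      assume h: "int j \<le> \<lfloor>x / c\<rfloor>"
      then have "0 \<le> \<lfloor>x / c\<rfloor>" by linarith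
      with h show "j \<le> nat \<lfloor>x / c\<rfloor>" by (simp add: le_nat_iff)
    next
      assume h: "j \<le> nat \<lfloor>x / c\<rfloor>"
      then have "0 < nat \<lfloor>x / c\<rfloor>" using that by linarith
      then have "0 \<le> \<lfloor>x / c\<rfloor>" by linarith
      with h show "int j \<le> \<lfloor>x / c\<rfloor>" by (simp add: le_nat_iff)
    qed
    finally show ?thesis .
  qed
  then show ?thesis by auto
qed

lemma ell_count_eq:
  assumes "a > 0"
  shows "ell_count a 1 x = nat \<lfloor>x / (a * pi)\<rfloor> + nat \<lfloor>x / pi\<rfloor>"
proof -
  have "{(i, j). (i::nat) \<in> {1, 2} \<and> (j::nat) \<ge> 1 \<and>
      real j * (if i = 1 then a else 1) * pi \<le> x}
    = Pair 1 ` {j::nat. j \<ge> 1 \<and> real j * (a * pi) \<le> x} \<union> Pair 2 ` {j::nat. j \<ge> 1 \<and> real j * pi \<le> x}"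
    by (auto simp: mult.assoc)
  also have "\<dots> = Pair 1 ` {1..nat \<lfloor>x / (a * pi)\<rfloor>} \<union> Pair 2 ` {1..nat \<lfloor>x / pi\<rfloor>}"
    using cnt_set[of "a*pi" x] cnt_set[of pi x] assms by simp
  finally have e: "{(i, j). (i::nat) \<in> {1, 2} \<and> (j::nat) \<ge> 1 \<and>
      real j * (if i = 1 then a else 1) * pi \<le> x} = \<dots>" .
  have "card (Pair (1::nat) ` {1..nat \<lfloor>x / (a * pi)\<rfloor>} \<union> Pair (2::nat) ` {1..nat \<lfloor>x / pi\<rfloor>})
     = card (Pair (1::nat) ` {1..nat \<lfloor>x / (a * pi)\<rfloor>}) + card (Pair (2::nat) ` {1..nat \<lfloor>x / pi\<rfloor>})"
    by (rule card_Un_disjoint) auto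
  also have "\<dots> = nat \<lfloor>x / (a * pi)\<rfloor> + nat \<lfloor>x / pi\<rfloor>"
    by (simp add: card_image inj_on_def)
  finally show ?thesis unfolding ell_count_def e by simp
qed

lemma nat_floor_mult:
  fixes y :: real and s :: nat
  shows "s * nat \<lfloor>y\<rfloor> \<le> nat \<lfloor>real s * y\<rfloor>"
proof (cases "y \<ge> 0")
  case True
  have "real s * of_int \<lfloor>y\<rfloor> \<le> real s * y" by (simp add: mult_left_mono)
  then have "int s * \<lfloor>y\<rfloor> \<le> \<lfloor>real s * y\<rfloor>" by (simp add: le_floor_iff)
  moreover have "int (s * nat \<lfloor>y\<rfloor>) = int s * \<lfloor>y\<rfloor>" using True by simp
  ultimately show ?thesis by linarith
next
  case False
  then have "nat \<lfloor>y\<rfloor> = 0" by simp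
  then show ?thesis by simp
qed

theorem mainTheorem7:
  fixes r s :: nat and a :: real
  assumes "r \<ge> 1" and "s \<ge> 1" and "0 < a" and "a \<le> 1"
  shows "EH_cap_norm (2 * r * s) a 1 \<le> EH_cap_norm (2 * r) a 1"
proof -
  define S where "S k = {x. k \<le> ell_count a 1 x}" for k
  have sc: "real s * x \<in> S (2*r*s)" if "x \<in> S (2*r)" for x
  proof -
    have h: "2*r \<le> nat \<lfloor>x / (a * pi)\<rfloor> + nat \<lfloor>x / pi\<rfloor>"
      using that assms by (simp add: S_def ell_count_eq)
    have "2*r*s \<le> s * nat \<lfloor>x / (a * pi)\<rfloor> + s * nat \<lfloor>x / pi\<rfloor>"
      using mult_right_mono[OF h, of s] by (simp add: algebra_simps)
    also have "\<dots> \<le> nat \<lfloor>real s * (x / (a * pi))\<rfloor> + nat \<lfloor>real s * (x / pi)\<rfloor>"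
      using nat_floor_mult[of s "x / (a * pi)"] nat_floor_mult[of s "x / pi"] by (intro add_mono) (simp_all add: times_divide_eq_right)
    finally show ?thesis using assms by (simp add: S_def ell_count_eq)
  qed
  have fl: "\<lfloor>2 * real r\<rfloor> = int (2*r)" by (metis floor_of_nat of_nat_mult of_nat_numeral)
  have ne: "2 * r * pi \<in> S (2*r)"
  proof -
    have "nat \<lfloor>2 * real r * pi / pi\<rfloor> = 2*r" using fl by simp
    then show ?thesis using assms by (simp add: S_def ell_count_eq del: times_divide_eq_right)
  qed
  have bdd: "bdd_below (S (2*r*s))"
  proof (rule bdd_belowI[of _ 0])
    fix x assume "x \<in> S (2*r*s)"
    then have "2*r*s \<le> nat \<lfloor>x / (a * pi)\<rfloor> + nat \<lfloor>x / pi\<rfloor>"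
      using assms by (simp add: S_def ell_count_eq)
    moreover have "1 \<le> 2*r*s" using assms by simp
    ultimately have "1 \<le> nat \<lfloor>x / (a * pi)\<rfloor> + nat \<lfloor>x / pi\<rfloor>" by linarith
    then have "\<lfloor>x / pi\<rfloor> \<ge> 0 \<or> \<lfloor>x / (a*pi)\<rfloor> \<ge> 0" by linarith
    then have "0 \<le> x / pi \<or> 0 \<le> x / (a*pi)" by linarith
    moreover have "a * pi > 0" using assms by simp
    ultimately show "0 \<le> x" using pi_gt_zero
      by (auto simp: zero_le_divide_iff)
  qed
  have key: "EH_cap (2*r*s) a 1 \<le> real s * EH_cap (2*r) a 1"
  proof -
    have "EH_cap (2*r*s) a 1 / real s \<le> EH_cap (2*r) a 1"
      unfolding EH_cap_def S_def[symmetric]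
    proof (rule cInf_greatest)
      show "S (2*r) \<noteq> {}" using ne by blast
      fix x assume "x \<in> S (2*r)"
      then have "Inf (S (2*r*s)) \<le> real s * x" using sc bdd by (intro cInf_lower)
      then show "Inf (S (2*r*s)) / real s \<le> x" using assms by (simp add: divide_le_eq mult.commute)
    qed
    then show ?thesis using assms by (simp add: divide_le_eq mult.commute)
  qed
  have d1: "(2*r*s + 1) div 2 = r*s" by simp
  have d2: "(2*r + 1) div 2 = r" by simp
  have rpos: "real r * pi > 0" using assms by simp
  have "EH_cap (2*r*s) a 1 / (real (r*s) * pi) \<le> real s * EH_cap (2*r) a 1 / (real (r*s) * pi)"
    using key assms by (intro divide_right_mono) auto
  also have "\<dots> = EH_cap (2*r) a 1 / (real r * pi)" using assms by simp
  finally show ?thesis unfolding EH_cap_norm_def d1 d2 .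
qed

end
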